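(* Let $T$ be a tree. If $f(X)$ is a nonzero minor of $L(T,X)$ (the determinant of a square submatrix $L(T,X)[I,J]$ with $|I|=|J|\geq1$) whose leading coefficient is positive, then there exists a $2$-matching $\mathcal{M}$ of $T^\ell$ such that $f(X)=d(\mathcal{M},X)$.
   Context: A tree is a simple connected graph without cycles. $L(T,X)$ is the matrix indexed by $V(T)$ with diagonal entries $x_u$ and off-diagonal entry $-1$ for adjacent vertices and $0$ otherwise. Leading coefficients are taken with respect to the degree lexicographic monomial order. A $2$-matching of a graph (loops allowed) is a set $\mathcal{M}$ of edges such that every vertex is incident to at most two edges of $\mathcal{M}$ (a loop counts twice for incidence but as one edge). $T^\ell$ is $T$ with a loop added at each vertex. Components of $\mathcal{M}$ are single loops or paths of $T$; orient each path $w_1\cdots w_{m+1}$ (either direction), with heads $\{w_2,\dots,w_{m+1}\}$ and tails $\{w_1,\dots,w_m\}$, a loop $uu$ having head and tail $u$; $h(\mathcal{M})$, $t(\mathcal{M})$ are the unions of heads, resp. tails. $d(\mathcal{M},X)=\pm\det L(T,X)[h(\mathcal{M}),t(\mathcal{M})]$, the sign chosen so that the leading coefficient is positive. *)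

theory Defs
  imports "HOL-Library.Poly_Mapping" "Jordan_Normal_Form.Determinant"
begin

(* Integer multivariate polynomials in variables x_u (u :: 'a): monomials are
   exponent vectors 'a \<Rightarrow>\<^sub>0 nat, polynomials are finitely supported maps
   monomial \<Rightarrow> coefficient. *)
type_synonym 'a mpoly_int = "('a \<Rightarrow>\<^sub>0 nat) \<Rightarrow>\<^sub>0 int"

definition mdeg :: "('a \<Rightarrow>\<^sub>0 nat) \<Rightarrow> nat" where
  "mdeg m = (\<Sum>v\<in>Poly_Mapping.keys m. Poly_Mapping.lookup m v)"

(* lexicographic order, variable x_u bigger than x_v when u < v *)
definition lex_less :: "('a::linorder \<Rightarrow>\<^sub>0 nat) \<Rightarrow> ('a \<Rightarrow>\<^sub>0 nat) \<Rightarrow> bool" where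
  "lex_less m1 m2 \<longleftrightarrow> (\<exists>v. (\<forall>u<v. Poly_Mapping.lookup m1 u = Poly_Mapping.lookup m2 u) \<and> Poly_Mapping.lookup m1 v < Poly_Mapping.lookup m2 v)"

definition deglex_less :: "('a::linorder \<Rightarrow>\<^sub>0 nat) \<Rightarrow> ('a \<Rightarrow>\<^sub>0 nat) \<Rightarrow> bool" where
  "deglex_less m1 m2 \<longleftrightarrow> mdeg m1 < mdeg m2 \<or> (mdeg m1 = mdeg m2 \<and> lex_less m1 m2)"

definition lead_monom :: "'a::linorder mpoly_int \<Rightarrow> ('a \<Rightarrow>\<^sub>0 nat)" where
  "lead_monom p = (THE m. m \<in> Poly_Mapping.keys p \<and> (\<forall>m'\<in>Poly_Mapping.keys p. m' \<noteq> m \<longrightarrow> deglex_less m' m))"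

definition lead_coeff_dl :: "'a::linorder mpoly_int \<Rightarrow> int" where
  "lead_coeff_dl p = Poly_Mapping.lookup p (lead_monom p)"

definition mvar :: "'a \<Rightarrow> 'a mpoly_int" where
  "mvar u = Poly_Mapping.single (Poly_Mapping.single u 1) 1"

definition graph :: "'a set \<Rightarrow> 'a set set \<Rightarrow> bool" where
  "graph V E \<longleftrightarrow> finite V \<and> (\<forall>e\<in>E. e \<subseteq> V \<and> card e = 2)"

definition connected_graph :: "'a set \<Rightarrow> 'a set set \<Rightarrow> bool" where
  "connected_graph V E \<longleftrightarrow>
     (\<forall>u\<in>V. \<forall>v\<in>V. (u, v) \<in> {(x, y). {x, y} \<in> E}\<^sup>*)"

definition is_cycle :: "'a set set \<Rightarrow> 'a list \<Rightarrow> bool" where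
  "is_cycle E c \<longleftrightarrow> length c \<ge> 3 \<and> distinct c \<and>
     (\<forall>i. Suc i < length c \<longrightarrow> {c ! i, c ! Suc i} \<in> E) \<and> {last c, hd c} \<in> E"

definition tree :: "'a set \<Rightarrow> 'a set set \<Rightarrow> bool" where
  "tree V E \<longleftrightarrow> graph V E \<and> V \<noteq> {} \<and> connected_graph V E \<and> (\<nexists>c. is_cycle E c)"

definition Lentry :: "'a set set \<Rightarrow> 'a \<Rightarrow> 'a \<Rightarrow> 'a mpoly_int" where
  "Lentry E u v = (if u = v then mvar u else if {u, v} \<in> E then - 1 else 0)"

definition Lsub :: "'a set set \<Rightarrow> 'a list \<Rightarrow> 'a list \<Rightarrow> 'a mpoly_int mat" where
  "Lsub E rs cs = mat (length rs) (length cs) (\<lambda>(i, j). Lentry E (rs ! i) (cs ! j))"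

(* 2-matchings of T^l: edges of T or loops {u}; a loop counts twice for incidence *)
definition two_matching_loops :: "'a set \<Rightarrow> 'a set set \<Rightarrow> 'a set set \<Rightarrow> bool" where
  "two_matching_loops V E M \<longleftrightarrow>
     M \<subseteq> E \<union> {{u} | u. u \<in> V} \<and>
     (\<forall>u\<in>V. (if {u} \<in> M then 2 else 0) + card {e\<in>M. card e = 2 \<and> u \<in> e} \<le> (2::nat))"

(* an orientation of the path components of M: each non-loop edge gets exactly one
   direction, and every vertex has in-degree and out-degree at most 1, so every path
   w_1 ... w_{m+1} is oriented consistently in one of its two directions *)
definition orientation :: "'a set set \<Rightarrow> ('a \<times> 'a) set \<Rightarrow> bool" where
  "orientation M D \<longleftrightarrow>
     (\<forall>(u, v)\<in>D. u \<noteq> v \<and> {u, v} \<in> M) \<and>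
     (\<forall>u v. u \<noteq> v \<and> {u, v} \<in> M \<longrightarrow> ((u, v) \<in> D \<longleftrightarrow> (v, u) \<notin> D)) \<and>
     (\<forall>u v w. (u, v) \<in> D \<and> (u, w) \<in> D \<longrightarrow> v = w) \<and>
     (\<forall>u v w. (u, w) \<in> D \<and> (v, w) \<in> D \<longrightarrow> u = v)"

definition heads :: "'a set set \<Rightarrow> ('a \<times> 'a) set \<Rightarrow> 'a set" where
  "heads M D = {v. \<exists>u. (u, v) \<in> D} \<union> {u. {u} \<in> M}"

definition tails :: "'a set set \<Rightarrow> ('a \<times> 'a) set \<Rightarrow> 'a set" where
  "tails M D = {u. \<exists>v. (u, v) \<in> D} \<union> {u. {u} \<in> M}"

definition dM :: "'a::linorder set set \<Rightarrow> 'a set set \<Rightarrow> ('a \<times> 'a) set \<Rightarrow> 'a mpoly_int" where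
  "dM E M D = (let p = det (Lsub E (sorted_list_of_set (heads M D)) (sorted_list_of_set (tails M D)))
               in if lead_coeff_dl p > 0 then p else - p)"

end

theory Submission
  imports Defs
begin

lemma Lentry_sym: "Lentry E u v = Lentry E v u"
  unfolding Lentry_def by (auto simp: insert_commute)

lemma Lsub_transpose: "transpose_mat (Lsub E rs cs) = Lsub E cs rs"
  unfolding Lsub_def by (auto simp: Lentry_sym)

lemma det_rows_perm:
  assumes "distinct rs" "distinct rs'" "set rs = set rs'" "length cs = length rs"
  shows "\<exists>s::'a mpoly_int. (s = 1 \<or> s = -1) \<and> det (Lsub E rs' cs) = s * det (Lsub E rs cs)"
proof -
  define n where "n = length rs"
  have len: "length rs' = n" using assms distinct_card n_def by metis
  define ix where "ix = (\<lambda>x. THE k. k < n \<and> rs ! k = x)"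
  have ix: "ix x < n \<and> rs ! (ix x) = x" if "x \<in> set rs" for x
  proof -
    have "\<exists>!k. k < n \<and> rs ! k = x"
      using that assms(1) by (auto simp: n_def in_set_conv_nth nth_eq_iff_index_eq)
    thus ?thesis unfolding ix_def by (rule theI')
  qed
  define p where "p = (\<lambda>i. if i < n then ix (rs' ! i) else i)"
  have bij: "bij_betw p {0..<n} {0..<n}"
  proof (rule bij_betw_imageI)
    show "inj_on p {0..<n}"
    proof (rule inj_onI)
      fix i j assume ij: "i \<in> {0..<n}" "j \<in> {0..<n}" "p i = p j"
      hence "ix (rs' ! i) = ix (rs' ! j)" by (simp add: p_def)
      moreover have "rs' ! i \<in> set rs" "rs' ! j \<in> set rs" using ij len assms(3) by auto
      ultimately have "rs' ! i = rs' ! j" by (metis ix)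
      thus "i = j" using ij len assms(2) by (simp add: nth_eq_iff_index_eq)
    qed
    show "p ` {0..<n} = {0..<n}"
    proof -
      have "p ` {0..<n} \<subseteq> {0..<n}" using assms len ix by (auto simp: p_def)
      moreover have "card (p ` {0..<n}) = n" using card_image[OF \<open>inj_on p {0..<n}\<close>] by simp
      ultimately show ?thesis by (simp add: card_subset_eq)
    qed
  qed
  have pp: "p permutes {0..<n}" by (rule bij_imp_permutes[OF bij]) (auto simp: p_def)
  have A: "Lsub E rs cs \<in> carrier_mat n n" unfolding Lsub_def using assms n_def by auto
  have ent: "Lsub E rs' cs $$ (i, j) = Lsub E rs cs $$ (p i, j)" if ij: "i < n" "j < n" for i j
  proof -
    have "rs' ! i \<in> set rs" using ij len assms(3) by auto
    from ix[OF this] ij len assms(4) show ?thesis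
      by (auto simp: p_def n_def Lsub_def)
  qed
  have "Lsub E rs' cs = mat n n (\<lambda>(i,j). Lsub E rs cs $$ (p i, j))"
    by (rule eq_matI) (use len assms ent in \<open>auto simp: n_def Lsub_def\<close>)
  hence "det (Lsub E rs' cs) = signof p * det (Lsub E rs cs)"
    using det_permute_rows[OF A pp] by simp
  moreover have "signof p = (1::'a mpoly_int) \<or> signof p = (-1::'a mpoly_int)"
    by (cases rule: sign_cases[of p]) auto
  ultimately show ?thesis by blast
qed

lemma det_perm_both:
  assumes "distinct rs" "distinct rs'" "set rs = set rs'"
    "distinct cs" "distinct cs'" "set cs = set cs'" "length cs = length rs"
  shows "\<exists>s::'a mpoly_int. (s = 1 \<or> s = -1) \<and> det (Lsub E rs' cs') = s * det (Lsub E rs cs)"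
proof -
  have lcs: "length cs' = length cs" using assms by (metis distinct_card)
  have lrs: "length rs' = length rs" using assms by (metis distinct_card)
  obtain s1 :: "'a mpoly_int" where s1: "s1 = 1 \<or> s1 = -1" "det (Lsub E rs' cs') = s1 * det (Lsub E rs cs')"
    using det_rows_perm[of rs rs' cs' E] assms lcs by auto
  have "det (Lsub E rs cs') = det (transpose_mat (Lsub E rs cs'))"
    by (rule det_transpose[symmetric]) (auto simp: Lsub_def lcs assms)
  also have "\<dots> = det (Lsub E cs' rs)" by (simp add: Lsub_transpose)
  finally have e1: "det (Lsub E rs cs') = det (Lsub E cs' rs)" .
  obtain s2 :: "'a mpoly_int" where s2: "s2 = 1 \<or> s2 = -1" "det (Lsub E cs' rs) = s2 * det (Lsub E cs rs)"
    using det_rows_perm[of cs cs' rs E] assms by auto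
  have "det (Lsub E cs rs) = det (transpose_mat (Lsub E cs rs))"
    by (rule det_transpose[symmetric]) (auto simp: Lsub_def assms)
  also have "\<dots> = det (Lsub E rs cs)" by (simp add: Lsub_transpose)
  finally have e2: "det (Lsub E cs rs) = det (Lsub E rs cs)" .
  have "det (Lsub E rs' cs') = (s1 * s2) * det (Lsub E rs cs)"
    using s1 s2 e1 e2 by (simp add: mult.assoc)
  moreover have "s1 * s2 = 1 \<or> s1 * s2 = -1" using s1 s2 by auto
  ultimately show ?thesis by blast
qed

lemma exists_tau:
  assumes "distinct rs" "distinct cs" "length cs = length rs" "det (Lsub E rs cs) \<noteq> 0"
  shows "\<exists>\<tau>. inj_on \<tau> (set rs) \<and> \<tau> ` set rs = set cs \<and> (\<forall>v\<in>set rs. Lentry E v (\<tau> v) \<noteq> 0)"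
proof -
  define n where "n = length rs"
  have A: "Lsub E rs cs \<in> carrier_mat n n" unfolding Lsub_def using assms n_def by auto
  obtain p where pp: "p permutes {0..<n}" and pr: "(\<Prod>i = 0..<n. Lsub E rs cs $$ (i, p i)) \<noteq> 0"
    using assms(4) unfolding det_def'[OF A]
    by (metis (no_types, lifting) mem_Collect_eq mult_zero_right sum.neutral)
  have ent: "Lsub E rs cs $$ (i, p i) \<noteq> 0" if "i < n" for i
    using pr that by (metis atLeastLessThan_iff finite_atLeastLessThan prod_zero zero_le)
  define ix where "ix = (\<lambda>x. THE k. k < n \<and> rs ! k = x)"
  have ix: "ix x < n \<and> rs ! (ix x) = x" if "x \<in> set rs" for x
  proof -
    have "\<exists>!k. k < n \<and> rs ! k = x"
      using that assms(1) by (auto simp: n_def in_set_conv_nth nth_eq_iff_index_eq)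
    thus ?thesis unfolding ix_def by (rule theI')
  qed
  have pn: "p i < n" if "i < n" for i using pp that by (meson atLeastLessThan_iff permutes_in_image zero_le)
  have pinj: "inj p" using pp by (rule permutes_inj)
  define \<tau> where "\<tau> = (\<lambda>v. cs ! p (ix v))"
  have inj: "inj_on \<tau> (set rs)"
  proof (rule inj_onI)
    fix v w assume vw: "v \<in> set rs" "w \<in> set rs" "\<tau> v = \<tau> w"
    hence "p (ix v) = p (ix w)" using ix pn assms(2,3) by (auto simp: \<tau>_def n_def nth_eq_iff_index_eq)
    hence "ix v = ix w" using pinj by (meson injD)
    thus "v = w" using ix vw by metis
  qed
  have sub: "\<tau> ` set rs \<subseteq> set cs" using ix pn assms(3) by (auto simp: \<tau>_def n_def)
  have "card (\<tau> ` set rs) = card (set cs)"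
    using card_image[OF inj] assms by (simp add: distinct_card)
  hence img: "\<tau> ` set rs = set cs" using sub by (simp add: card_subset_eq)
  have "Lentry E v (\<tau> v) \<noteq> 0" if "v \<in> set rs" for v
    using ent[of "ix v"] ix[OF that] pn[of "ix v"] assms(3)
    by (auto simp: Lsub_def \<tau>_def n_def)
  with inj img show ?thesis by blast
qed

lemma no2cycle:
  assumes inj: "inj_on \<tau> R" and img: "\<tau> ` R = C" and fin: "finite R"
    and ok: "\<forall>v\<in>R. \<tau> v = v \<or> {v, \<tau> v} \<in> E"
  shows "\<exists>\<sigma>. inj_on \<sigma> R \<and> \<sigma> ` R = C \<and> (\<forall>v\<in>R. \<sigma> v = v \<or> {v, \<sigma> v} \<in> E)
     \<and> (\<forall>v\<in>R. \<sigma> v \<noteq> v \<and> \<sigma> v \<in> R \<longrightarrow> \<sigma> (\<sigma> v) \<noteq> v)"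
proof -
  define \<sigma> where "\<sigma> = (\<lambda>v. if \<tau> v \<in> R \<and> \<tau> (\<tau> v) = v then v else \<tau> v)"
  have inj2: "inj_on \<sigma> R"
  proof (rule inj_onI)
    fix a b assume ab: "a \<in> R" "b \<in> R" "\<sigma> a = \<sigma> b"
    show "a = b"
    proof (cases "\<tau> a \<in> R \<and> \<tau> (\<tau> a) = a")
      case True note A = this
      show ?thesis
      proof (cases "\<tau> b \<in> R \<and> \<tau> (\<tau> b) = b")
        case True thus ?thesis using A ab by (simp add: \<sigma>_def)
      next
        case False
        have "\<sigma> a = a" "\<sigma> b = \<tau> b" using A False unfolding \<sigma>_def by auto
        hence "a = \<tau> b" using ab(3) by simp
        hence "\<tau> a = b" using A ab inj by (metis inj_onD)
        thus ?thesis using False A \<open>a = \<tau> b\<close> ab by auto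
      qed
    next
      case False note A = this
      show ?thesis
      proof (cases "\<tau> b \<in> R \<and> \<tau> (\<tau> b) = b")
        case True
        have "\<sigma> a = \<tau> a" "\<sigma> b = b" using A True unfolding \<sigma>_def by auto
        hence "b = \<tau> a" using ab(3) by simp
        hence "\<tau> b = a" using True ab inj by (metis inj_onD)
        thus ?thesis using True A \<open>b = \<tau> a\<close> ab by auto
      next
        case False
        have "\<sigma> a = \<tau> a" "\<sigma> b = \<tau> b" using A False unfolding \<sigma>_def by auto
        thus ?thesis using ab inj by (metis inj_onD)
      qed
    qed
  qed
  have sub: "\<sigma> ` R \<subseteq> C" using img by (auto simp: \<sigma>_def) (metis image_eqI)
  have "card (\<sigma> ` R) = card C"
    using card_image[OF inj2] card_image[OF inj] img by simp
  moreover have "finite C" using fin img by blast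
  ultimately have img2: "\<sigma> ` R = C" using sub by (metis card_subset_eq)
  have ok2: "\<forall>v\<in>R. \<sigma> v = v \<or> {v, \<sigma> v} \<in> E" using ok by (auto simp: \<sigma>_def)
  have nc: "\<forall>v\<in>R. \<sigma> v \<noteq> v \<and> \<sigma> v \<in> R \<longrightarrow> \<sigma> (\<sigma> v) \<noteq> v"
    by (auto simp: \<sigma>_def)
  show ?thesis using inj2 img2 ok2 nc by blast
qed

lemma build_matching:
  assumes inj: "inj_on \<sigma> R" and img: "\<sigma> ` R = C" and fin: "finite R" and RV: "R \<subseteq> V"
    and ok: "\<forall>v\<in>R. \<sigma> v = v \<or> {v, \<sigma> v} \<in> E"
    and nc: "\<forall>v\<in>R. \<sigma> v \<noteq> v \<and> \<sigma> v \<in> R \<longrightarrow> \<sigma> (\<sigma> v) \<noteq> v"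
    and M: "M = {{v} | v. v \<in> R \<and> \<sigma> v = v} \<union> {{\<sigma> v, v} | v. v \<in> R \<and> \<sigma> v \<noteq> v}"
    and D: "D = {(\<sigma> v, v) | v. v \<in> R \<and> \<sigma> v \<noteq> v}"
  shows "two_matching_loops V E M \<and> orientation M D \<and> heads M D = R \<and> tails M D = C"
proof -
  have loopM: "{u} \<in> M \<longleftrightarrow> u \<in> R \<and> \<sigma> u = u" for u
    unfolding M by (auto simp: doubleton_eq_iff)
  have edgeM: "{u, v} \<in> M \<longleftrightarrow> (\<exists>w\<in>R. \<sigma> w \<noteq> w \<and> {u, v} = {\<sigma> w, w})" if "u \<noteq> v" for u v
    unfolding M using that by (auto simp: doubleton_eq_iff)
  have heads: "heads M D = R"
    unfolding heads_def using loopM by (auto simp: D)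
  have tails: "tails M D = C"
  proof -
    have "{u. \<exists>v. (u, v) \<in> D} = \<sigma> ` {v \<in> R. \<sigma> v \<noteq> v}" by (auto simp: D)
    moreover have "{u. {u} \<in> M} = \<sigma> ` {v \<in> R. \<sigma> v = v}" using loopM by force
    ultimately have "tails M D = \<sigma> ` ({v \<in> R. \<sigma> v \<noteq> v} \<union> {v \<in> R. \<sigma> v = v})"
      unfolding tails_def by (simp add: image_Un)
    also have "{v \<in> R. \<sigma> v \<noteq> v} \<union> {v \<in> R. \<sigma> v = v} = R" by blast
    finally show ?thesis using img by simp
  qed
  have orient: "orientation M D"
    unfolding orientation_def
  proof (intro conjI allI impI)
    show "\<forall>(u, v)\<in>D. u \<noteq> v \<and> {u, v} \<in> M" unfolding D M by auto
  next
    fix u v assume uv: "u \<noteq> v \<and> {u, v} \<in> M"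
    then obtain w where w: "w \<in> R" "\<sigma> w \<noteq> w" "{u, v} = {\<sigma> w, w}" using edgeM by blast
    show "(u, v) \<in> D \<longleftrightarrow> (v, u) \<notin> D"
    proof
      assume a: "(u, v) \<in> D"
      show "(v, u) \<notin> D"
      proof
        assume "(v, u) \<in> D"
        with a have "u = \<sigma> v" "v = \<sigma> u" "u \<in> R" "v \<in> R" "\<sigma> v \<noteq> v" by (auto simp: D)
        thus False using nc by metis
      qed
    next
      assume "(v, u) \<notin> D"
      thus "(u, v) \<in> D" using w by (auto simp: D doubleton_eq_iff)
    qed
  next
    fix u v w assume "(u, v) \<in> D \<and> (u, w) \<in> D"
    thus "v = w" using inj by (auto simp: D inj_on_def)
  next
    fix u v w assume "(u, w) \<in> D \<and> (v, w) \<in> D"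
    thus "u = v" by (auto simp: D)
  qed
  have tm: "two_matching_loops V E M"
    unfolding two_matching_loops_def
  proof (intro conjI ballI)
    show "M \<subseteq> E \<union> {{u} |u. u \<in> V}"
    proof
      fix e assume "e \<in> M"
      then consider v where "v \<in> R" "\<sigma> v = v" "e = {v}" | v where "v \<in> R" "\<sigma> v \<noteq> v" "e = {\<sigma> v, v}"
        unfolding M by blast
      thus "e \<in> E \<union> {{u} |u. u \<in> V}"
      proof cases
        case 1 thus ?thesis using RV by blast
      next
        case 2
        hence "{v, \<sigma> v} \<in> E" using ok by blast
        moreover have "{v, \<sigma> v} = {\<sigma> v, v}" by (rule insert_commute)
        ultimately show ?thesis using 2 by simp
      qed
    qed
  next
    fix u assume "u \<in> V"
    let ?S = "{e \<in> M. card e = 2 \<and> u \<in> e}"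
    have Ssub: "?S \<subseteq> (\<lambda>w. {\<sigma> w, w}) ` {w \<in> R. \<sigma> w \<noteq> w \<and> (w = u \<or> \<sigma> w = u)}"
    proof
      fix e assume e: "e \<in> ?S"
      hence "e \<in> M" "card e = 2" "u \<in> e" by auto
      then consider v where "v \<in> R" "\<sigma> v = v" "e = {v}" | v where "v \<in> R" "\<sigma> v \<noteq> v" "e = {\<sigma> v, v}"
        unfolding M by blast
      thus "e \<in> (\<lambda>w. {\<sigma> w, w}) ` {w \<in> R. \<sigma> w \<noteq> w \<and> (w = u \<or> \<sigma> w = u)}"
      proof cases
        case 1 thus ?thesis using \<open>card e = 2\<close> by simp
      next
        case 2 thus ?thesis using \<open>u \<in> e\<close> by blast
      qed
    qed
    show "(if {u} \<in> M then 2 else 0) + card ?S \<le> 2"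
    proof (cases "{u} \<in> M")
      case True
      hence u: "u \<in> R" "\<sigma> u = u" using loopM by auto
      have "{w \<in> R. \<sigma> w \<noteq> w \<and> (w = u \<or> \<sigma> w = u)} = {}"
        using u inj by (auto simp: inj_on_def)
      hence "?S = {}" using Ssub by auto
      hence "card ?S = 0" by (simp only: card.empty)
      thus ?thesis using True by simp
    next
      case False
      let ?W = "{w \<in> R. \<sigma> w \<noteq> w \<and> (w = u \<or> \<sigma> w = u)}"
      have W1: "card {w \<in> R. \<sigma> w = u} \<le> 1"
        using inj fin by (auto simp: card_le_Suc0_iff_eq inj_on_def)
      have "?W \<subseteq> insert u {w \<in> R. \<sigma> w = u}" by auto
      hence "card ?W \<le> card (insert u {w \<in> R. \<sigma> w = u})" using fin by (intro card_mono) auto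
      also have "\<dots> \<le> Suc (card {w \<in> R. \<sigma> w = u})" by (rule card_insert_le_m1) auto
      finally have "card ?W \<le> 2" using W1 by simp
      moreover have "card ?S \<le> card ((\<lambda>w. {\<sigma> w, w}) ` ?W)"
        using Ssub fin by (intro card_mono) auto
      moreover have "card ((\<lambda>w. {\<sigma> w, w}) ` ?W) \<le> card ?W" by (rule card_image_le) (use fin in auto)
      ultimately show ?thesis using False by simp
    qed
  qed
  show ?thesis using tm orient heads tails by blast
qed

lemma lead_coeff_neg: "lead_coeff_dl (- p) = - lead_coeff_dl (p :: 'a::linorder mpoly_int)"
proof -
  have k: "Poly_Mapping.keys (- p) = Poly_Mapping.keys p" by (auto simp: in_keys_iff)
  have "lead_monom (- p) = lead_monom p" unfolding lead_monom_def k ..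
  thus ?thesis unfolding lead_coeff_dl_def by simp
qed

lemma if_ne_zero_imp: "(if P then a else if Q then b else (0::'b::zero)) \<noteq> 0 \<Longrightarrow> P \<or> Q"
  by (cases P; cases Q) simp_all

theorem lemma3p3:
  fixes V :: "'a::linorder set" and E :: "'a set set"
    and rs cs :: "'a list" and f :: "'a mpoly_int"
  assumes "tree V E"
    and "distinct rs" and "distinct cs" and "set rs \<subseteq> V" and "set cs \<subseteq> V"
    and "length rs = length cs" and "length rs \<ge> 1"
    and "f = det (Lsub E rs cs)"
    and "f \<noteq> 0" and "lead_coeff_dl f > 0"
  shows "\<exists>M D. two_matching_loops V E M \<and> orientation M D \<and> f = dM E M D"
proof -
  obtain \<tau> where t1: "inj_on \<tau> (set rs)" and t2: "\<tau> ` set rs = set cs"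
    and t3: "\<forall>v\<in>set rs. Lentry E v (\<tau> v) \<noteq> 0"
    using exists_tau[of rs cs E] assms by auto
  have t3': "\<forall>v\<in>set rs. \<tau> v = v \<or> {v, \<tau> v} \<in> E"
  proof
    fix v assume "v \<in> set rs"
    hence "Lentry E v (\<tau> v) \<noteq> 0" using t3 by blast
    thus "\<tau> v = v \<or> {v, \<tau> v} \<in> E" unfolding Lentry_def by (metis if_ne_zero_imp)
  qed
  obtain \<sigma> where s1: "inj_on \<sigma> (set rs)" and s2: "\<sigma> ` set rs = set cs"
    and s3: "\<forall>v\<in>set rs. \<sigma> v = v \<or> {v, \<sigma> v} \<in> E"
    and s4: "\<forall>v\<in>set rs. \<sigma> v \<noteq> v \<and> \<sigma> v \<in> set rs \<longrightarrow> \<sigma> (\<sigma> v) \<noteq> v"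
    using no2cycle[OF t1 t2 _ t3'] by blast
  define M where "M = {{v} | v. v \<in> set rs \<and> \<sigma> v = v} \<union> {{\<sigma> v, v} | v. v \<in> set rs \<and> \<sigma> v \<noteq> v}"
  define D where "D = {(\<sigma> v, v) | v. v \<in> set rs \<and> \<sigma> v \<noteq> v}"
  have B: "two_matching_loops V E M \<and> orientation M D \<and> heads M D = set rs \<and> tails M D = set cs"
    by (rule build_matching[OF s1 s2 _ assms(4) s3 s4 M_def D_def]) simp
  define p where "p = det (Lsub E (sorted_list_of_set (heads M D)) (sorted_list_of_set (tails M D)))"
  have hp: "p = det (Lsub E (sorted_list_of_set (set rs)) (sorted_list_of_set (set cs)))"
    unfolding p_def using B by simp
  obtain s :: "'a mpoly_int" where s: "s = 1 \<or> s = -1" "p = s * f"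
  proof -
    have "\<exists>s::'a mpoly_int. (s = 1 \<or> s = -1) \<and> det (Lsub E (sorted_list_of_set (set rs)) (sorted_list_of_set (set cs))) = s * det (Lsub E rs cs)"
      by (rule det_perm_both) (use assms(2,3,6) in simp_all)
    thus ?thesis using that hp assms(8) by metis
  qed
  have "dM E M D = f"
  proof (cases "s = 1")
    case True
    hence "p = f" using s by simp
    thus ?thesis using assms(10) unfolding dM_def Let_def p_def[symmetric] by simp
  next
    case False
    hence "p = - f" using s by simp
    hence "lead_coeff_dl p < 0" using assms(10) lead_coeff_neg[of f] by simp
    thus ?thesis using \<open>p = - f\<close> unfolding dM_def Let_def p_def[symmetric] by simp
  qed
  thus ?thesis using B by blast
qed

end
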